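(* Let $P(s)=s^\alpha$ with $\alpha>1$. Consider the class of non-migratory SRPT-based online policies on $m$ servers defined as follows. For a server $j$ and time $t$, let $y_j(t)$ be the least remaining processing time among the jobs queued at server $j$, with $y_j(t)=0$ if server $j$ is idle. When a job of size $x$ arrives at time $t$: if the set $\{j : y_j(t)>x\}$ is nonempty, the job is assigned to some server in this set; otherwise it is assigned to any server or held in a central queue. Each server may preempt among the jobs queued at it, but a job once assigned to a server must complete service at that server (no migration); speeds are chosen arbitrarily. Then there is a constant $\kappa>0$ depending only on $\alpha$ such that every policy in this class has competitive ratio at least $\kappa\, m^{1-1/\alpha}$; i.e., the competitive ratio is $\Omega(m^{1-1/\alpha})$.
   Context: There are $m$ identical servers, each of which can run at any speed $s\ge 0$ at power $P(s)$; work is processed at rate $s$. An input instance $\sigma$ is a finite set of jobs with release times and sizes. The cost of a schedule is $C=\int n(t)\,dt+\int\sum_{k=1}^m P(s_k(t))\,dt$, where $n(t)$ is the number of released, unfinished jobs at time $t$ and $s_k(t)$ the speed of server $k$. $\mathsf{OPT}$ is the offline optimal schedule (knowing $\sigma$ in advance, preemption and migration allowed, no job processed on two servers simultaneously). The competitive ratio of an online policy $A$ is $\sup_\sigma C_A(\sigma)/C_{\mathsf{OPT}}(\sigma)$. *)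

theory Defs
  imports "HOL-Analysis.Analysis"
begin

text \<open>
  Instances: n jobs indexed 0..<n, release times r i >= 0, sizes x i > 0.
  Schedules: w k i t = speed that server k (k < m) devotes to job i at time t.
\<close>

definition valid_instance :: "nat \<Rightarrow> (nat \<Rightarrow> real) \<Rightarrow> (nat \<Rightarrow> real) \<Rightarrow> bool" where
  "valid_instance n r x \<longleftrightarrow> (\<forall>i<n. 0 \<le> r i \<and> 0 < x i)"

definition feasible_schedule ::
  "nat \<Rightarrow> nat \<Rightarrow> (nat \<Rightarrow> real) \<Rightarrow> (nat \<Rightarrow> nat \<Rightarrow> real \<Rightarrow> real) \<Rightarrow> bool" where
  "feasible_schedule m n r w \<longleftrightarrow>
     (\<forall>k<m. \<forall>i<n. w k i \<in> borel_measurable borel \<and> (\<forall>t. 0 \<le> w k i t) \<and> (\<forall>t. t < r i \<longrightarrow> w k i t = 0)) \<and>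
     (\<forall>k<m. \<forall>t. \<forall>i<n. \<forall>i'<n. 0 < w k i t \<and> 0 < w k i' t \<longrightarrow> i = i') \<and>
     (\<forall>i<n. \<forall>t. \<forall>k<m. \<forall>k'<m. 0 < w k i t \<and> 0 < w k' i t \<longrightarrow> k = k')"

definition work :: "nat \<Rightarrow> (nat \<Rightarrow> nat \<Rightarrow> real \<Rightarrow> real) \<Rightarrow> nat \<Rightarrow> real \<Rightarrow> ennreal" where
  "work m w i t = (\<integral>\<^sup>+ \<tau>. ennreal (\<Sum>k<m. w k i \<tau>) * indicator {..t} \<tau> \<partial>lborel)"

definition nalive ::
  "nat \<Rightarrow> nat \<Rightarrow> (nat \<Rightarrow> real) \<Rightarrow> (nat \<Rightarrow> real) \<Rightarrow> (nat \<Rightarrow> nat \<Rightarrow> real \<Rightarrow> real) \<Rightarrow> real \<Rightarrow> nat" where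
  "nalive m n r x w t = card {i. i < n \<and> r i \<le> t \<and> work m w i t < ennreal (x i)}"

definition cost ::
  "nat \<Rightarrow> real \<Rightarrow> nat \<Rightarrow> (nat \<Rightarrow> real) \<Rightarrow> (nat \<Rightarrow> real) \<Rightarrow> (nat \<Rightarrow> nat \<Rightarrow> real \<Rightarrow> real) \<Rightarrow> ennreal" where
  "cost m \<alpha> n r x w =
     (\<integral>\<^sup>+ t. ennreal (real (nalive m n r x w t)) \<partial>lborel) +
     (\<integral>\<^sup>+ t. (\<Sum>k<m. ennreal ((\<Sum>i<n. w k i t) powr \<alpha>)) \<partial>lborel)"

definition opt :: "nat \<Rightarrow> real \<Rightarrow> nat \<Rightarrow> (nat \<Rightarrow> real) \<Rightarrow> (nat \<Rightarrow> real) \<Rightarrow> ennreal" where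
  "opt m \<alpha> n r x = (INF w \<in> {w. feasible_schedule m n r w}. cost m \<alpha> n r x w)"

text \<open>A policy maps an instance (n, r, x) to (w, a, d): schedule w, server assignment a,
  dispatch time d (d i = infinity: never dispatched; d i > r i: held in the central queue).\<close>
type_synonym policy =
  "nat \<Rightarrow> (nat \<Rightarrow> real) \<Rightarrow> (nat \<Rightarrow> real) \<Rightarrow> (nat \<Rightarrow> nat \<Rightarrow> real \<Rightarrow> real) \<times> (nat \<Rightarrow> nat) \<times> (nat \<Rightarrow> ereal)"

text \<open>Jobs queued at server j at the arrival of job i (jobs arriving at the same instant
  are considered in index order).\<close>
definition queued ::
  "nat \<Rightarrow> nat \<Rightarrow> (nat \<Rightarrow> real) \<Rightarrow> (nat \<Rightarrow> real) \<Rightarrow> (nat \<Rightarrow> nat \<Rightarrow> real \<Rightarrow> real) \<Rightarrow> (nat \<Rightarrow> nat) \<Rightarrow> (nat \<Rightarrow> ereal)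
     \<Rightarrow> nat \<Rightarrow> nat \<Rightarrow> nat set" where
  "queued m n r x w a d i j =
     {l. l < n \<and> l \<noteq> i \<and> a l = j \<and> d l \<le> ereal (r i) \<and> (r l < r i \<or> (r l = r i \<and> l < i)) \<and>
         work m w l (r i) < ennreal (x l)}"

definition yval ::
  "nat \<Rightarrow> nat \<Rightarrow> (nat \<Rightarrow> real) \<Rightarrow> (nat \<Rightarrow> real) \<Rightarrow> (nat \<Rightarrow> nat \<Rightarrow> real \<Rightarrow> real) \<Rightarrow> (nat \<Rightarrow> nat) \<Rightarrow> (nat \<Rightarrow> ereal)
     \<Rightarrow> nat \<Rightarrow> nat \<Rightarrow> real" where
  "yval m n r x w a d i j =
     (let Q = queued m n r x w a d i j in
      if Q = {} then 0 else Min ((\<lambda>l. x l - enn2real (work m w l (r i))) ` Q))"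

definition srpt_nonmig_rules :: "nat \<Rightarrow> policy \<Rightarrow> bool" where
  "srpt_nonmig_rules m A \<longleftrightarrow>
     (\<forall>n r x. valid_instance n r x \<longrightarrow>
        (case A n r x of (w, a, d) \<Rightarrow>
           feasible_schedule m n r w \<and>
           (\<forall>i<n. a i < m \<and> ereal (r i) \<le> d i) \<and>
           (\<forall>k<m. \<forall>i<n. \<forall>t. 0 < w k i t \<longrightarrow> k = a i \<and> d i \<le> ereal t) \<and>
           (\<forall>i<n. {j. j < m \<and> yval m n r x w a d i j > x i} \<noteq> {} \<longrightarrow>
                 d i = ereal (r i) \<and> a i \<in> {j. j < m \<and> yval m n r x w a d i j > x i})))"

definition online_policy :: "nat \<Rightarrow> policy \<Rightarrow> bool" where
  "online_policy m A \<longleftrightarrow>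
     (\<forall>n r x n' r' x' t. valid_instance n r x \<and> valid_instance n' r' x' \<and>
        (\<forall>i. (i < n \<and> r i \<le> t) \<longleftrightarrow> (i < n' \<and> r' i \<le> t)) \<and>
        (\<forall>i<n. r i \<le> t \<longrightarrow> r' i = r i \<and> x' i = x i) \<longrightarrow>
        (case A n r x of (w, a, d) \<Rightarrow> case A n' r' x' of (w', a', d') \<Rightarrow>
           (\<forall>i<n. r i \<le> t \<longrightarrow>
              (\<forall>k<m. \<forall>\<tau>\<le>t. w k i \<tau> = w' k i \<tau>) \<and>
              ((d i \<le> ereal t \<or> d' i \<le> ereal t) \<longrightarrow> d i = d' i \<and> a i = a' i))))"

definition srpt_nonmig_policy :: "nat \<Rightarrow> policy \<Rightarrow> bool" where
  "srpt_nonmig_policy m A \<longleftrightarrow> online_policy m A \<and> srpt_nonmig_rules m A"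

definition comp_ratio :: "nat \<Rightarrow> real \<Rightarrow> policy \<Rightarrow> ennreal" where
  "comp_ratio m \<alpha> A =
     (SUP (n, r, x) \<in> {(n, r, x). valid_instance n r x}.
        cost m \<alpha> n r x (fst (A n r x)) / opt m \<alpha> n r x)"

end

theory Submission
  imports Defs
begin

lemma young_pt:
  fixes s c \<alpha> :: real
  assumes "0 \<le> s" "0 < c" "1 < \<alpha>"
  shows "s \<le> c + s powr \<alpha> / c powr (\<alpha> - 1)"
proof (cases "s \<le> c")
  case True
  have "0 \<le> s powr \<alpha> / c powr (\<alpha> - 1)" by simp
  then show ?thesis using True by linarith
next
  case False
  then have s1: "1 \<le> s / c" using assms by simp
  have "s / c = (s/c) powr 1" using s1 assms by simp
  also have "\<dots> \<le> (s/c) powr \<alpha>" using assms s1 by (intro powr_mono) auto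
  also have "\<dots> = s powr \<alpha> / c powr \<alpha>" using assms by (simp add: powr_divide)
  finally have 1: "s / c \<le> s powr \<alpha> / c powr \<alpha>" .
  have "c powr \<alpha> = c powr (1 + (\<alpha> - 1))" by simp
  also have "\<dots> = c powr 1 * c powr (\<alpha> - 1)" by (rule powr_add)
  finally have 2: "c powr \<alpha> = c * c powr (\<alpha> - 1)" using assms by simp
  have "s = c * (s / c)" using assms by simp
  also have "\<dots> \<le> c * (s powr \<alpha> / c powr \<alpha>)" using 1 assms by (intro mult_left_mono) auto
  also have "\<dots> = s powr \<alpha> / c powr (\<alpha> - 1)" unfolding 2 using assms by simp
  finally show ?thesis using assms by simp
qed

lemma young_int:
  fixes f :: "real \<Rightarrow> real" and \<alpha> c a b :: real
  assumes f: "f \<in> borel_measurable borel" "\<And>t. 0 \<le> f t" and ab: "a \<le> b" and c: "0 < c" and al: "1 < \<alpha>"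
  shows "(\<integral>\<^sup>+ t. ennreal (f t) * indicator {a..b} t \<partial>lborel) \<le>
     ennreal (c * (b - a)) + ennreal (1 / c powr (\<alpha> - 1)) * (\<integral>\<^sup>+ t. ennreal (f t powr \<alpha>) * indicator {a..b} t \<partial>lborel)"
proof -
  let ?K = "1 / c powr (\<alpha> - 1)"
  have K: "0 \<le> ?K" by simp
  have "(\<integral>\<^sup>+ t. ennreal (f t) * indicator {a..b} t \<partial>lborel) \<le>
     (\<integral>\<^sup>+ t. ennreal c * indicator {a..b} t + ennreal ?K * (ennreal (f t powr \<alpha>) * indicator {a..b} t) \<partial>lborel)"
  proof (intro nn_integral_mono)
    fix t
    have "f t \<le> c + ?K * f t powr \<alpha>" using young_pt[OF f(2) c al] by simp
    then have "ennreal (f t) \<le> ennreal (c + ?K * f t powr \<alpha>)" by (rule ennreal_leI)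
    also have "\<dots> = ennreal c + ennreal ?K * ennreal (f t powr \<alpha>)"
      using c K by (metis ennreal_mult ennreal_plus less_le mult_nonneg_nonneg powr_ge_zero)
    finally have *: "ennreal (f t) \<le> ennreal c + ennreal ?K * ennreal (f t powr \<alpha>)" .
    show "ennreal (f t) * indicator {a..b} t \<le> ennreal c * indicator {a..b} t + ennreal ?K * (ennreal (f t powr \<alpha>) * indicator {a..b} t)"
      using * by (cases "t \<in> {a..b}") auto
  qed
  also have "\<dots> = ennreal c * emeasure lborel {a..b} + ennreal ?K * (\<integral>\<^sup>+ t. ennreal (f t powr \<alpha>) * indicator {a..b} t \<partial>lborel)"
    using f by (subst nn_integral_add) (auto simp: nn_integral_cmult_indicator nn_integral_cmult)
  also have "\<dots> = ennreal (c * (b - a)) + ennreal ?K * (\<integral>\<^sup>+ t. ennreal (f t powr \<alpha>) * indicator {a..b} t \<partial>lborel)"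
    using ab c by (simp add: ennreal_mult)
  finally show ?thesis .
qed

lemma card_le_sum_ind:
  fixes n :: nat
  assumes "\<And>i. i < n \<Longrightarrow> Q i \<Longrightarrow> \<tau> \<in> B i"
  shows "real (card {i. i < n \<and> Q i}) \<le> (\<Sum>i<n. indicator (B i) \<tau>)"
proof -
  have "card {i. i < n \<and> Q i} \<le> card {i\<in>{..<n}. \<tau> \<in> B i}"
  proof (rule card_mono)
    show "finite {i \<in> {..<n}. \<tau> \<in> B i}" by (rule finite_subset[of _ "{..<n}"]) auto
  qed (use assms in auto)
  also have "real (card {i\<in>{..<n}. \<tau> \<in> B i}) = (\<Sum>i\<in>{i\<in>{..<n}. \<tau> \<in> B i}. 1)" by simp
  also have "\<dots> = (\<Sum>i<n. indicator (B i) \<tau>)"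
  proof -
    have "(\<Sum>i\<in>{i\<in>{..<n}. \<tau> \<in> B i}. 1) = (\<Sum>i<n. if \<tau> \<in> B i then 1 else (0::real))"
      by (simp add: sum.If_cases Int_def)
    also have "\<dots> = (\<Sum>i<n. indicator (B i) \<tau>)" by (intro sum.cong) (auto simp: indicator_def)
    finally show ?thesis .
  qed
  finally show ?thesis by simp
qed

definition simple_sched :: "(nat \<Rightarrow> nat) \<Rightarrow> (nat \<Rightarrow> real) \<Rightarrow> (nat \<Rightarrow> real) \<Rightarrow> nat \<Rightarrow> nat \<Rightarrow> real \<Rightarrow> real" where
  "simple_sched \<sigma> b x k i \<tau> = (if k = \<sigma> i then indicator {b i..<b i + x i} \<tau> else 0)"

lemma opt_simple:
  assumes val: "valid_instance n r x" and sig: "\<And>i. i < n \<Longrightarrow> \<sigma> i < m"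
    and rb: "\<And>i. i < n \<Longrightarrow> r i \<le> b i"
    and disj: "\<And>i i' \<tau>. i < n \<Longrightarrow> i' < n \<Longrightarrow> i \<noteq> i' \<Longrightarrow> \<sigma> i = \<sigma> i' \<Longrightarrow>
        \<tau> \<in> {b i..<b i + x i} \<Longrightarrow> \<tau> \<in> {b i'..<b i' + x i'} \<Longrightarrow> False"
    and al: "1 < \<alpha>"
  shows "opt m \<alpha> n r x \<le> ennreal ((\<Sum>i<n. b i + x i - r i) + (\<Sum>i<n. x i))"
proof -
  define w where "w = simple_sched \<sigma> b x"
  have xpos: "\<And>i. i < n \<Longrightarrow> 0 < x i" using val by (auto simp: valid_instance_def)
  have wnn: "\<And>k i \<tau>. 0 \<le> w k i \<tau>" by (simp add: w_def simple_sched_def)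
  have wpos: "\<And>k i \<tau>. 0 < w k i \<tau> \<Longrightarrow> k = \<sigma> i \<and> \<tau> \<in> {b i..<b i + x i}"
    by (auto simp: w_def simple_sched_def indicator_def split: if_splits)
  have feas: "feasible_schedule m n r w"
    unfolding feasible_schedule_def
  proof (intro conjI allI impI)
    fix k i assume "k < m" "i < n"
    have "w k i = (if k = \<sigma> i then indicator {b i..<b i + x i} else (\<lambda>_. 0))"
      by (auto simp: w_def simple_sched_def fun_eq_iff)
    then show "w k i \<in> borel_measurable borel" by simp
    fix \<tau> show "0 \<le> w k i \<tau>" by (rule wnn)
  next
    fix k i \<tau> assume "k < m" "i < n" "\<tau> < r i"
    then show "w k i \<tau> = 0" using rb[of i] by (auto simp: w_def simple_sched_def indicator_def)
  next
    fix k \<tau> i i' assume "k < m" "i < n" "i' < n" "0 < w k i \<tau> \<and> 0 < w k i' \<tau>"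
    then show "i = i'" using wpos disj by metis
  next
    fix i \<tau> k k' assume "i < n" "k < m" "k' < m" "0 < w k i \<tau> \<and> 0 < w k' i \<tau>"
    then show "k = k'" using wpos by metis
  qed
  have "opt m \<alpha> n r x \<le> cost m \<alpha> n r x w"
    unfolding opt_def using feas by (intro INF_lower) auto
  also have "\<dots> \<le> ennreal ((\<Sum>i<n. b i + x i - r i) + (\<Sum>i<n. x i))"
  proof -
    have sumk: "(\<Sum>k<m. w k i s) = indicator {b i..<b i + x i} s" if "i < n" for i s
      using sig[OF that] by (simp add: w_def simple_sched_def)
    have finw: "work m w i \<tau> = ennreal (x i)" if "i < n" "b i + x i \<le> \<tau>" for i \<tau>
    proof -
      have "work m w i \<tau> = (\<integral>\<^sup>+ s. indicator {b i..<b i + x i} s \<partial>lborel)"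
        unfolding work_def using that
        by (intro nn_integral_cong) (auto simp: sumk indicator_def)
      also have "\<dots> = ennreal (x i)" using xpos[OF that(1)] by simp
      finally show ?thesis .
    qed
    have flow: "(\<integral>\<^sup>+ t. ennreal (real (nalive m n r x w t)) \<partial>lborel) \<le> ennreal (\<Sum>i<n. b i + x i - r i)"
    proof -
      have "(\<integral>\<^sup>+ t. ennreal (real (nalive m n r x w t)) \<partial>lborel) \<le>
            (\<integral>\<^sup>+ t. (\<Sum>i<n. indicator {r i..<b i + x i} t) \<partial>lborel)"
      proof (intro nn_integral_mono)
        fix t
        have "real (nalive m n r x w t) \<le> (\<Sum>i<n. indicator {r i..<b i + x i} t)"
          unfolding nalive_def
        proof (rule card_le_sum_ind)
          fix i assume i: "i < n" and q: "r i \<le> t \<and> work m w i t < ennreal (x i)"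
          have "t < b i + x i"
          proof (rule ccontr)
            assume "\<not> t < b i + x i"
            then have "work m w i t = ennreal (x i)" using finw[OF i] by simp
            then show False using q by simp
          qed
          then show "t \<in> {r i..<b i + x i}" using q by auto
        qed
        then have "ennreal (real (nalive m n r x w t)) \<le> ennreal (\<Sum>i<n. indicator {r i..<b i + x i} t)"
          by (rule ennreal_leI)
        also have "\<dots> = (\<Sum>i<n. ennreal (indicator {r i..<b i + x i} t))"
          by (rule sum_ennreal[symmetric]) auto
        finally show "ennreal (real (nalive m n r x w t)) \<le> (\<Sum>i<n. indicator {r i..<b i + x i} t)"
          by (simp add: ennreal_indicator)
      qed
      also have "\<dots> = (\<Sum>i<n. ennreal (b i + x i - r i))"
        using rb xpos by (subst nn_integral_sum) (auto intro!: sum.cong simp: less_imp_le add_increasing2)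
      also have "\<dots> = ennreal (\<Sum>i<n. b i + x i - r i)"
        using rb xpos by (subst sum_ennreal) (auto simp: less_imp_le add_increasing2)
      finally show ?thesis .
    qed
    have pt01: "(\<Sum>i<n. w k i t) powr \<alpha> \<le> (\<Sum>i<n. w k i t)" for k t
    proof (cases "\<exists>i0<n. 0 < w k i0 t")
      case True
      then obtain i0 where i0: "i0 < n" "0 < w k i0 t" by auto
      have "(\<Sum>i<n. w k i t) = (\<Sum>i<n. if i = i0 then w k i0 t else 0)"
      proof (intro sum.cong refl)
        fix i assume i: "i \<in> {..<n}"
        show "w k i t = (if i = i0 then w k i0 t else 0)"
        proof (cases "i = i0")
          case False
          have "\<not> 0 < w k i t" using wpos[OF i0(2)] wpos disj[of i i0 t] i i0 False by auto
          then show ?thesis using wnn[of k i t] False by auto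
        qed simp
      qed
      also have "\<dots> = w k i0 t" using i0 by simp
      also have "\<dots> = 1" using i0(2) by (auto simp: w_def simple_sched_def indicator_def split: if_splits)
      finally show ?thesis by simp
    next
      case False
      then have "(\<Sum>i<n. w k i t) = 0" using wnn by (intro sum.neutral) (meson antisym lessThan_iff not_less)
      then show ?thesis by simp
    qed
    have energy: "(\<integral>\<^sup>+ t. (\<Sum>k<m. ennreal ((\<Sum>i<n. w k i t) powr \<alpha>)) \<partial>lborel) \<le> ennreal (\<Sum>i<n. x i)"
    proof -
      have "(\<integral>\<^sup>+ t. (\<Sum>k<m. ennreal ((\<Sum>i<n. w k i t) powr \<alpha>)) \<partial>lborel) \<le>
            (\<integral>\<^sup>+ t. (\<Sum>i<n. indicator {b i..<b i + x i} t) \<partial>lborel)"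
      proof (intro nn_integral_mono)
        fix t
        have "(\<Sum>k<m. ennreal ((\<Sum>i<n. w k i t) powr \<alpha>)) \<le> (\<Sum>k<m. ennreal (\<Sum>i<n. w k i t))"
          by (intro sum_mono ennreal_leI pt01)
        also have "\<dots> = ennreal (\<Sum>k<m. \<Sum>i<n. w k i t)"
          using wnn by (subst sum_ennreal) (auto intro: sum_nonneg)
        also have "(\<Sum>k<m. \<Sum>i<n. w k i t) = (\<Sum>i<n. indicator {b i..<b i + x i} t)"
          by (subst sum.swap) (auto intro!: sum.cong simp: sumk)
        also have "ennreal (\<Sum>i<n. indicator {b i..<b i + x i} t) = (\<Sum>i<n. ennreal (indicator {b i..<b i + x i} t))"
          by (rule sum_ennreal[symmetric]) auto
        finally show "(\<Sum>k<m. ennreal ((\<Sum>i<n. w k i t) powr \<alpha>)) \<le> (\<Sum>i<n. indicator {b i..<b i + x i} t)"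
          by (simp add: ennreal_indicator)
      qed
      also have "\<dots> = (\<Sum>i<n. ennreal (x i))"
        using xpos by (subst nn_integral_sum) (auto intro!: sum.cong simp: less_imp_le)
      also have "\<dots> = ennreal (\<Sum>i<n. x i)"
        using xpos by (subst sum_ennreal) (auto simp: less_imp_le)
      finally show ?thesis .
    qed
    have "cost m \<alpha> n r x w \<le> ennreal (\<Sum>i<n. b i + x i - r i) + ennreal (\<Sum>i<n. x i)"
      unfolding cost_def by (intro add_mono flow energy)
    also have "\<dots> = ennreal ((\<Sum>i<n. b i + x i - r i) + (\<Sum>i<n. x i))"
      using rb xpos by (subst ennreal_plus) (auto intro!: sum_nonneg simp: less_imp_le add_increasing2)
    finally show ?thesis .
  qed
  finally show ?thesis .
qed

lemma arith1:
  fixes N \<alpha> :: real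
  assumes N: "1 \<le> N" and al: "1 < \<alpha>"
  shows "N powr (1 / \<alpha>) / 32 * N powr (1 - 1 / \<alpha>) = N / 32"
    and "N / 32 * (N powr (1 / \<alpha>) / 32) powr (\<alpha> - 1) = N powr (2 - 1 / \<alpha>) / 32 powr \<alpha>"
proof -
  have "N powr (1 / \<alpha>) * N powr (1 - 1 / \<alpha>) = N powr (1/\<alpha> + (1 - 1/\<alpha>))" by (rule powr_add[symmetric])
  also have "\<dots> = N" using N by simp
  finally show "N powr (1 / \<alpha>) / 32 * N powr (1 - 1 / \<alpha>) = N / 32" by simp
  have a: "(N powr (1 / \<alpha>) / 32) powr (\<alpha> - 1) = N powr ((\<alpha> - 1) / \<alpha>) / 32 powr (\<alpha> - 1)"
    using N by (simp add: powr_divide powr_powr)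
  have b: "N * N powr ((\<alpha> - 1) / \<alpha>) = N powr (2 - 1 / \<alpha>)"
  proof -
    have "N * N powr ((\<alpha> - 1) / \<alpha>) = N powr 1 * N powr ((\<alpha> - 1) / \<alpha>)" using N by simp
    also have "\<dots> = N powr (1 + (\<alpha> - 1) / \<alpha>)" by (rule powr_add[symmetric])
    also have "1 + (\<alpha> - 1) / \<alpha> = 2 - 1 / \<alpha>" using al by (simp add: field_simps)
    finally show ?thesis .
  qed
  have c: "32 * 32 powr (\<alpha> - 1) = (32::real) powr \<alpha>"
  proof -
    have "(32::real) powr \<alpha> = 32 powr (1 + (\<alpha> - 1))" by simp
    also have "\<dots> = 32 powr 1 * 32 powr (\<alpha> - 1)" by (rule powr_add)
    finally show ?thesis by simp
  qed
  show "N / 32 * (N powr (1 / \<alpha>) / 32) powr (\<alpha> - 1) = N powr (2 - 1 / \<alpha>) / 32 powr \<alpha>"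
    unfolding a b[symmetric] c[symmetric] by simp
qed

lemma work_mono:
  assumes "\<tau> \<le> T" "\<And>k s. k < m \<Longrightarrow> 0 \<le> w k i s"
  shows "work m w i \<tau> \<le> work m w i T"
  unfolding work_def using assms
  by (intro nn_integral_mono) (auto simp: indicator_def intro!: mult_left_mono)

lemma lb_single:
  fixes J :: "nat set" and t0 \<alpha> :: real
  assumes feas: "feasible_schedule m n r w" and Jn: "J \<subseteq> {..<n}" and cJ: "card J = N" and N1: "1 \<le> N"
    and j: "j < m" and rJ: "\<And>i. i \<in> J \<Longrightarrow> r i = t0" and xJ: "\<And>i. i \<in> J \<Longrightarrow> 1/8 \<le> x i"
    and onj: "\<And>i k \<tau>. i \<in> J \<Longrightarrow> k < m \<Longrightarrow> 0 < w k i \<tau> \<Longrightarrow> k = j"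
    and al: "1 < \<alpha>"
  shows "ennreal (real N powr (2 - 1 / \<alpha>) / 32 powr \<alpha>) \<le> cost m \<alpha> n r x w"
proof -
  have finJ: "finite J" using Jn finite_subset by blast
  have meas: "\<And>k i. k < m \<Longrightarrow> i < n \<Longrightarrow> w k i \<in> borel_measurable borel"
    and wnn: "\<And>k i t. k < m \<Longrightarrow> i < n \<Longrightarrow> 0 \<le> w k i t"
    and wrel: "\<And>k i t. k < m \<Longrightarrow> i < n \<Longrightarrow> t < r i \<Longrightarrow> w k i t = 0"
    using feas unfolding feasible_schedule_def by auto
  define L where "L = real N powr (1 - 1 / \<alpha>)"
  define T where "T = t0 + L"
  have Lpos: "0 < L" using N1 by (simp add: L_def)
  define s' where "s' = (\<lambda>\<tau>. \<Sum>i\<in>J. w j i \<tau>)"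
  have s'nn: "0 \<le> s' \<tau>" for \<tau> unfolding s'_def using wnn j Jn by (auto intro!: sum_nonneg)
  have s'meas: "s' \<in> borel_measurable borel" unfolding s'_def
    using meas j Jn by (intro borel_measurable_sum) auto
  have sumk: "(\<Sum>k<m. w k i \<tau>) = w j i \<tau>" if i: "i \<in> J" for i \<tau>
  proof -
    have "(\<Sum>k<m. w k i \<tau>) = (\<Sum>k<m. if k = j then w j i \<tau> else 0)"
    proof (intro sum.cong refl)
      fix k assume k: "k \<in> {..<m}"
      show "w k i \<tau> = (if k = j then w j i \<tau> else 0)"
      proof (cases "k = j")
        case False
        then have "\<not> 0 < w k i \<tau>" using onj[OF i] k by auto
        then show ?thesis using wnn[of k i \<tau>] k i Jn False by force
      qed simp
    qed
    also have "\<dots> = w j i \<tau>" using j by simp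
    finally show ?thesis .
  qed
  have workT: "work m w i T = (\<integral>\<^sup>+ \<tau>. ennreal (w j i \<tau>) * indicator {t0..T} \<tau> \<partial>lborel)" if i: "i \<in> J" for i
    unfolding work_def
  proof (intro nn_integral_cong)
    fix \<tau>
    show "ennreal (\<Sum>k<m. w k i \<tau>) * indicator {..T} \<tau> = ennreal (w j i \<tau>) * indicator {t0..T} \<tau>"
    proof (cases "\<tau> < t0")
      case True
      then have "w j i \<tau> = 0" using wrel[OF j, of i \<tau>] rJ[OF i] i Jn by auto
      then show ?thesis using sumk[OF i] True by (simp add: indicator_def)
    next
      case False
      then show ?thesis using sumk[OF i] by (simp add: indicator_def)
    qed
  qed
  define W where "W = (\<Sum>i\<in>J. work m w i T)"
  have W_eq: "W = (\<integral>\<^sup>+ \<tau>. ennreal (s' \<tau>) * indicator {t0..T} \<tau> \<partial>lborel)"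
  proof -
    have "W = (\<Sum>i\<in>J. \<integral>\<^sup>+ \<tau>. ennreal (w j i \<tau>) * indicator {t0..T} \<tau> \<partial>lborel)"
      unfolding W_def using workT by simp
    also have "\<dots> = (\<integral>\<^sup>+ \<tau>. (\<Sum>i\<in>J. ennreal (w j i \<tau>) * indicator {t0..T} \<tau>) \<partial>lborel)"
      using meas j Jn by (intro nn_integral_sum[symmetric]) auto
    also have "\<dots> = (\<integral>\<^sup>+ \<tau>. ennreal (s' \<tau>) * indicator {t0..T} \<tau> \<partial>lborel)"
    proof (intro nn_integral_cong)
      fix \<tau>
      have "(\<Sum>i\<in>J. ennreal (w j i \<tau>)) = ennreal (s' \<tau>)"
        unfolding s'_def using wnn j Jn by (intro sum_ennreal) auto
      then show "(\<Sum>i\<in>J. ennreal (w j i \<tau>) * indicator {t0..T} \<tau>) = ennreal (s' \<tau>) * indicator {t0..T} \<tau>"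
        by (simp add: sum_distrib_right[symmetric])
    qed
    finally show ?thesis .
  qed
  define Ej where "Ej = (\<integral>\<^sup>+ \<tau>. ennreal (s' \<tau> powr \<alpha>) * indicator {t0..T} \<tau> \<partial>lborel)"
  define En where "En = (\<integral>\<^sup>+ t. (\<Sum>k<m. ennreal ((\<Sum>i<n. w k i t) powr \<alpha>)) \<partial>lborel)"
  define Fl where "Fl = (\<integral>\<^sup>+ t. ennreal (real (nalive m n r x w t)) \<partial>lborel)"
  have cost_eq: "cost m \<alpha> n r x w = Fl + En" unfolding cost_def Fl_def En_def ..
  have young: "W \<le> ennreal (c * L) + ennreal (1 / c powr (\<alpha> - 1)) * Ej" if "0 < c" for c
    unfolding W_eq Ej_def using young_int[OF s'meas s'nn _ that al, of t0 T] Lpos by (simp add: T_def)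
  have Ej_le: "Ej \<le> En"
    unfolding Ej_def En_def
  proof (intro nn_integral_mono)
    fix t
    have "s' t \<le> (\<Sum>i<n. w j i t)" unfolding s'_def
      using Jn wnn j by (intro sum_mono2) auto
    then have "s' t powr \<alpha> \<le> (\<Sum>i<n. w j i t) powr \<alpha>" using s'nn al by (intro powr_mono2) auto
    then have "ennreal (s' t powr \<alpha>) \<le> ennreal ((\<Sum>i<n. w j i t) powr \<alpha>)" by (rule ennreal_leI)
    also have "\<dots> \<le> (\<Sum>k<m. ennreal ((\<Sum>i<n. w k i t) powr \<alpha>))"
      using j by (intro member_le_sum) auto
    finally show "ennreal (s' t powr \<alpha>) * indicator {t0..T} t \<le> (\<Sum>k<m. ennreal ((\<Sum>i<n. w k i t) powr \<alpha>))"
      by (simp add: indicator_def)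
  qed
  define S where "S = {i\<in>J. ennreal (x i) \<le> work m w i T}"
  have finS: "finite S" using finJ by (simp add: S_def)
  have W_ge: "ennreal (real (card S) / 8) \<le> W"
  proof -
    have "ennreal (real (card S) / 8) = (\<Sum>i\<in>S. ennreal (1/8))"
      by (simp add: ennreal_mult[symmetric] ennreal_of_nat_eq_real_of_nat)
    also have "\<dots> \<le> (\<Sum>i\<in>S. work m w i T)"
    proof (intro sum_mono)
      fix i assume "i \<in> S"
      then have "i \<in> J" "ennreal (x i) \<le> work m w i T" by (auto simp: S_def)
      moreover have "ennreal (1/8) \<le> ennreal (x i)" using xJ[OF \<open>i \<in> J\<close>] by (rule ennreal_leI)
      ultimately show "ennreal (1/8) \<le> work m w i T" by (metis order_trans)
    qed
    also have "\<dots> \<le> W" unfolding W_def using finJ by (intro sum_mono2) (auto simp: S_def)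
    finally show ?thesis .
  qed
  have Fl_ge: "ennreal (real (card (J - S)) * L) \<le> Fl"
  proof -
    have "ennreal (real (card (J - S)) * L) = (\<integral>\<^sup>+ t. ennreal (real (card (J - S))) * indicator {t0..T} t \<partial>lborel)"
      using Lpos by (simp add: nn_integral_cmult_indicator T_def ennreal_mult)
    also have "\<dots> \<le> Fl" unfolding Fl_def
    proof (intro nn_integral_mono)
      fix t
      show "ennreal (real (card (J - S))) * indicator {t0..T} t \<le> ennreal (real (nalive m n r x w t))"
      proof (cases "t \<in> {t0..T}")
        case True
        have "J - S \<subseteq> {i. i < n \<and> r i \<le> t \<and> work m w i t < ennreal (x i)}"
        proof
          fix i assume i: "i \<in> J - S"
          then have iJ: "i \<in> J" and "work m w i T < ennreal (x i)" by (auto simp: S_def not_le)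
          moreover have "work m w i t \<le> work m w i T"
            using True iJ Jn wnn by (intro work_mono) auto
          ultimately show "i \<in> {i. i < n \<and> r i \<le> t \<and> work m w i t < ennreal (x i)}"
            using Jn rJ True by fastforce
        qed
        then have "card (J - S) \<le> nalive m n r x w t" unfolding nalive_def
          by (intro card_mono) (auto intro: finite_subset[of _ "{..<n}"])
        then show ?thesis using True by (simp add: ennreal_leI)
      qed simp
    qed
    finally show ?thesis .
  qed
  define B where "B = real N powr (2 - 1 / \<alpha>) / 32 powr \<alpha>"
  have B0: "0 \<le> B" by (simp add: B_def)
  show ?thesis
  proof (cases "Ej = top")
    case True
    then have "En = top" using Ej_le by (simp add: top_unique)
    then show ?thesis by (simp add: cost_eq)
  next
    case False
    then obtain e where e: "Ej = ennreal e" "0 \<le> e" by (cases Ej) auto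
    show ?thesis
    proof (cases "real N / 2 \<le> real (card S)")
      case True
      define c where "c = real N powr (1 / \<alpha>) / 32"
      have cpos: "0 < c" using N1 by (simp add: c_def)
      have cL: "c * L = real N / 32" unfolding c_def L_def using arith1(1)[of "real N" \<alpha>] N1 al by simp
      have "ennreal (real (card S) / 8) \<le> ennreal (c * L) + ennreal (1 / c powr (\<alpha> - 1)) * ennreal e"
        using W_ge young[OF cpos] e by simp
      also have "\<dots> = ennreal (c * L + 1 / c powr (\<alpha> - 1) * e)"
        using cpos Lpos e by (metis ennreal_mult ennreal_plus less_le mult_nonneg_nonneg powr_ge_zero divide_nonneg_nonneg zero_le_one)
      finally have "real (card S) / 8 \<le> c * L + 1 / c powr (\<alpha> - 1) * e"
        using cpos Lpos e by (subst (asm) ennreal_le_iff) (auto intro!: add_nonneg_nonneg)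
      then have "real (card S) / 8 \<le> real N / 32 + e / c powr (\<alpha> - 1)" using cL by simp
      then have "real N / 32 \<le> e / c powr (\<alpha> - 1)" using True by linarith
      then have "real N / 32 * c powr (\<alpha> - 1) \<le> e" using cpos by (simp add: field_simps)
      moreover have "real N / 32 * c powr (\<alpha> - 1) = B" unfolding B_def c_def
        by (rule arith1(2)) (use N1 al in auto)
      ultimately have "B \<le> e" by simp
      then have "ennreal B \<le> En" using Ej_le e by (metis ennreal_leI order_trans)
      then show ?thesis unfolding cost_eq B_def by (simp add: add_increasing)
    next
      case False
      have cS: "card (J - S) = N - card S" using finJ cJ by (simp add: S_def card_Diff_subset)
      have "card S \<le> N" using finJ cJ by (metis S_def card_mono mem_Collect_eq subsetI)
      then have cge: "real N / 2 \<le> real (card (J - S))" using False cS by simp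
      have "B \<le> real N powr (2 - 1 / \<alpha>) / 2"
      proof -
        have "(32::real) powr 1 \<le> 32 powr \<alpha>" using al by (intro powr_mono) auto
        then have "2 \<le> (32::real) powr \<alpha>" by simp
        then show ?thesis unfolding B_def by (intro divide_left_mono) auto
      qed
      also have "real N powr (2 - 1 / \<alpha>) / 2 = real N / 2 * L"
      proof -
        have "real N * L = real N powr 1 * real N powr (1 - 1/\<alpha>)" using N1 by (simp add: L_def)
        also have "\<dots> = real N powr (1 + (1 - 1/\<alpha>))" by (rule powr_add[symmetric])
        finally show ?thesis by simp
      qed
      also have "\<dots> \<le> real (card (J - S)) * L" using cge Lpos by (intro mult_right_mono) auto
      finally have "ennreal B \<le> Fl" using Fl_ge by (metis ennreal_leI order_trans)
      then show ?thesis unfolding cost_eq B_def by (simp add: add_increasing2)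
    qed
  qed
qed

lemma online_get:
  assumes "online_policy m A" "valid_instance n r x" "valid_instance n' r' x'"
    "\<And>i. (i < n \<and> r i \<le> t) \<longleftrightarrow> (i < n' \<and> r' i \<le> t)"
    "\<And>i. i < n \<Longrightarrow> r i \<le> t \<Longrightarrow> r' i = r i \<and> x' i = x i"
    "A n r x = (w, a, d)" "A n' r' x' = (w', a', d')" "i < n" "r i \<le> t"
  shows "(\<forall>k<m. \<forall>\<tau>\<le>t. w k i \<tau> = w' k i \<tau>) \<and> ((d i \<le> ereal t \<or> d' i \<le> ereal t) \<longrightarrow> d i = d' i \<and> a i = a' i)"
proof -
  have "case A n r x of (w, a, d) \<Rightarrow> case A n' r' x' of (w', a', d') \<Rightarrow>
           (\<forall>i<n. r i \<le> t \<longrightarrow>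
              (\<forall>k<m. \<forall>\<tau>\<le>t. w k i \<tau> = w' k i \<tau>) \<and>
              ((d i \<le> ereal t \<or> d' i \<le> ereal t) \<longrightarrow> d i = d' i \<and> a i = a' i))"
  proof -
    have "valid_instance n r x \<and> valid_instance n' r' x' \<and>
        (\<forall>i. (i < n \<and> r i \<le> t) \<longleftrightarrow> (i < n' \<and> r' i \<le> t)) \<and>
        (\<forall>i<n. r i \<le> t \<longrightarrow> r' i = r i \<and> x' i = x i)" using assms(2-5) by blast
    then show ?thesis by (rule assms(1)[unfolded online_policy_def, rule_format])
  qed
  then show ?thesis unfolding assms(6,7) prod.case using assms(8,9) by blast
qed

lemma rules_get:
  assumes "srpt_nonmig_rules m A" "valid_instance n r x" "A n r x = (w, a, d)"
  shows "feasible_schedule m n r w" "\<And>i. i < n \<Longrightarrow> a i < m \<and> ereal (r i) \<le> d i"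
    "\<And>k i t. k < m \<Longrightarrow> i < n \<Longrightarrow> 0 < w k i t \<Longrightarrow> k = a i \<and> d i \<le> ereal t"
    "\<And>i. i < n \<Longrightarrow> {j. j < m \<and> yval m n r x w a d i j > x i} \<noteq> {} \<Longrightarrow>
                 d i = ereal (r i) \<and> a i \<in> {j. j < m \<and> yval m n r x w a d i j > x i}"
proof -
  have "case A n r x of (w, a, d) \<Rightarrow>
           feasible_schedule m n r w \<and>
           (\<forall>i<n. a i < m \<and> ereal (r i) \<le> d i) \<and>
           (\<forall>k<m. \<forall>i<n. \<forall>t. 0 < w k i t \<longrightarrow> k = a i \<and> d i \<le> ereal t) \<and>
           (\<forall>i<n. {j. j < m \<and> yval m n r x w a d i j > x i} \<noteq> {} \<longrightarrow>
                 d i = ereal (r i) \<and> a i \<in> {j. j < m \<and> yval m n r x w a d i j > x i})"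
    by (rule assms(1)[unfolded srpt_nonmig_rules_def, rule_format, OF assms(2)])
  then have H: "feasible_schedule m n r w \<and>
           (\<forall>i<n. a i < m \<and> ereal (r i) \<le> d i) \<and>
           (\<forall>k<m. \<forall>i<n. \<forall>t. 0 < w k i t \<longrightarrow> k = a i \<and> d i \<le> ereal t) \<and>
           (\<forall>i<n. {j. j < m \<and> yval m n r x w a d i j > x i} \<noteq> {} \<longrightarrow>
                 d i = ereal (r i) \<and> a i \<in> {j. j < m \<and> yval m n r x w a d i j > x i})"
    using assms(3) by simp
  show "feasible_schedule m n r w" using H by auto
  show "\<And>i. i < n \<Longrightarrow> a i < m \<and> ereal (r i) \<le> d i" using H by auto
  show "\<And>k i t. k < m \<Longrightarrow> i < n \<Longrightarrow> 0 < w k i t \<Longrightarrow> k = a i \<and> d i \<le> ereal t" using H by auto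
  show "\<And>i. i < n \<Longrightarrow> {j. j < m \<and> yval m n r x w a d i j > x i} \<noteq> {} \<Longrightarrow>
                 d i = ereal (r i) \<and> a i \<in> {j. j < m \<and> yval m n r x w a d i j > x i}" using H by auto
qed

lemma div_antimono_ennreal:
  fixes a b c :: ennreal
  assumes "b \<le> c"
  shows "a / c \<le> a / b"
  unfolding divide_ennreal_def
proof (intro mult_left_mono)
  show "inverse c \<le> inverse b"
  proof (cases b)
    case (real b')
    show ?thesis
    proof (cases c)
      case (real c')
      show ?thesis
      proof (cases "b' = 0")
        case True then show ?thesis using real \<open>b = ennreal b'\<close> by simp
      next
        case False
        then have "0 < b'" using \<open>0 \<le> b'\<close> by simp
        moreover have "b' \<le> c'" using assms real \<open>b = ennreal b'\<close> \<open>0 \<le> b'\<close> by (auto simp: ennreal_le_iff2)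
        ultimately show ?thesis using real \<open>b = ennreal b'\<close> by (simp add: inverse_ennreal ennreal_leI le_imp_inverse_le)
      qed
    next
      case top then show ?thesis by simp
    qed
  next
    case top then show ?thesis using assms by (simp add: top_unique)
  qed
qed simp

lemma feas_get:
  assumes "feasible_schedule m n r w"
  shows "\<And>k i. k < m \<Longrightarrow> i < n \<Longrightarrow> w k i \<in> borel_measurable borel"
    "\<And>k i t. k < m \<Longrightarrow> i < n \<Longrightarrow> 0 \<le> w k i t"
    "\<And>k i t. k < m \<Longrightarrow> i < n \<Longrightarrow> t < r i \<Longrightarrow> w k i t = 0"
  using assms unfolding feasible_schedule_def by auto

lemma main_lb:
  fixes \<alpha> :: real
  assumes al: "1 < \<alpha>" and m1: "1 \<le> m" and pol: "srpt_nonmig_policy m A"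
  shows "ennreal (real m powr (1 - 1 / \<alpha>) / (6 * 32 powr \<alpha>)) \<le> comp_ratio m \<alpha> A"
proof -
  have onl: "online_policy m A" and rul: "srpt_nonmig_rules m A"
    using pol by (auto simp: srpt_nonmig_policy_def)
  have ratio_ge: "cost m \<alpha> n r x (fst (A n r x)) / opt m \<alpha> n r x \<le> comp_ratio m \<alpha> A"
    if "valid_instance n r x" for n r x
    unfolding comp_ratio_def using that by (intro SUP_upper2[of "(n, r, x)"]) auto
  define r1 :: "nat \<Rightarrow> real" where "r1 = (\<lambda>_. 0)"
  define x1 :: "nat \<Rightarrow> real" where "x1 = (\<lambda>_. 1)"
  have val1: "valid_instance 1 r1 x1" by (simp add: valid_instance_def r1_def x1_def)
  obtain w1 a1 d1 where A1: "A 1 r1 x1 = (w1, a1, d1)" by (cases "A 1 r1 x1") auto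
  note R1 = rules_get[OF rul val1 A1]
  have opt1: "opt m \<alpha> 1 r1 x1 \<le> ennreal 2"
  proof -
    have "opt m \<alpha> 1 r1 x1 \<le> ennreal ((\<Sum>i<1. (\<lambda>_. 0) i + x1 i - r1 i) + (\<Sum>i<1. x1 i))"
      by (rule opt_simple[OF val1, of "\<lambda>_. 0" m "\<lambda>_. 0" \<alpha>]) (use m1 al in \<open>auto simp: r1_def\<close>)
    then show ?thesis by (simp add: r1_def x1_def)
  qed
  have opt1_fin: "opt m \<alpha> 1 r1 x1 \<noteq> top" using opt1 by (auto simp: top_unique)
  show ?thesis
  proof (cases "cost m \<alpha> 1 r1 x1 w1 = top")
    case True
    then have "cost m \<alpha> 1 r1 x1 (fst (A 1 r1 x1)) / opt m \<alpha> 1 r1 x1 = top"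
      using A1 opt1_fin by (simp add: ennreal_top_divide)
    then have "comp_ratio m \<alpha> A = top" using ratio_ge[OF val1] by (simp add: top_unique)
    then show ?thesis by simp
  next
    case False
    define j where "j = a1 0"
    have R12: "a1 0 < m \<and> ereal (r1 0) \<le> d1 0" by (rule R1(2)) simp
    have jm: "j < m" using R12 unfolding j_def by blast
    have w1pos: "\<And>k \<tau>. k < m \<Longrightarrow> 0 < w1 k 0 \<tau> \<Longrightarrow> k = j \<and> d1 0 \<le> ereal \<tau>"
      unfolding j_def by (rule R1(3)) auto
    have w1nn: "\<And>k i \<tau>. k < m \<Longrightarrow> i < 1 \<Longrightarrow> 0 \<le> w1 k i \<tau>"
      and w1meas: "\<And>k i. k < m \<Longrightarrow> i < 1 \<Longrightarrow> w1 k i \<in> borel_measurable borel"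
      by (rule feas_get[OF R1(1)]; assumption)+
    define Fl1 where "Fl1 = (\<integral>\<^sup>+ t. ennreal (real (nalive m 1 r1 x1 w1 t)) \<partial>lborel)"
    define E1 where "E1 = (\<integral>\<^sup>+ t. (\<Sum>k<m. ennreal ((\<Sum>i<1. w1 k i t) powr \<alpha>)) \<partial>lborel)"
    have cost1: "cost m \<alpha> 1 r1 x1 w1 = Fl1 + E1" unfolding cost_def Fl1_def E1_def ..
    have dfin: "d1 0 \<noteq> PInfty"
    proof
      assume dinf: "d1 0 = PInfty"
      have wz: "w1 k 0 \<tau> = 0" if "k < m" for k \<tau>
        using w1pos[OF that, of \<tau>] w1nn[OF that, of 0 \<tau>] dinf by force
      have work0: "work m w1 0 \<tau> = 0" for \<tau> unfolding work_def by (simp add: wz)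
      have "ennreal L \<le> Fl1" if "0 \<le> L" for L
      proof -
        have "ennreal L = (\<integral>\<^sup>+ t. indicator {0..L} t \<partial>lborel)" using that by simp
        also have "\<dots> \<le> Fl1" unfolding Fl1_def
        proof (intro nn_integral_mono)
          fix t
          show "indicator {0..L} t \<le> ennreal (real (nalive m 1 r1 x1 w1 t))"
          proof (cases "t \<in> {0..L}")
            case True
            have "{i. i < 1 \<and> r1 i \<le> t \<and> work m w1 i t < ennreal (x1 i)} = {0}"
              using True work0 by (auto simp: r1_def x1_def)
            then have "nalive m 1 r1 x1 w1 t = 1"
              unfolding nalive_def by simp
            then show ?thesis using True by (simp add: indicator_def)
          qed simp
        qed
        finally show ?thesis .
      qed
      moreover obtain cc where "Fl1 = ennreal cc" "0 \<le> cc"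
        using False cost1 by (cases Fl1) auto
      ultimately have "ennreal (cc + 1) \<le> ennreal cc" by (metis add_nonneg_nonneg zero_le_one)
      then show False using \<open>0 \<le> cc\<close> by (simp add: ennreal_le_iff)
    qed
    have R12: "a1 0 < m \<and> ereal (r1 0) \<le> d1 0" by (rule R1(2)) simp
    then have d10: "0 \<le> d1 0" by (simp add: r1_def zero_ereal_def)
    obtain D where D: "d1 0 = ereal D" using dfin d10 by (cases "d1 0") auto
    have D0: "0 \<le> D" using d10 D by simp
    obtain e1 where e1: "E1 = ennreal e1" "0 \<le> e1"
      using False cost1 by (cases E1) auto
    define c where "c = (4 * e1 + 1) powr (1 / (\<alpha> - 1))"
    have cpos: "0 < c" using e1 by (simp add: c_def)
    have cpow: "c powr (\<alpha> - 1) = 4 * e1 + 1"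
      unfolding c_def using e1 al by (simp add: powr_powr)
    define h where "h = 1 / (4 * c)"
    have hpos: "0 < h" using cpos by (simp add: h_def)
    define t where "t = D + h"
    have tpos: "0 < t" "D < t" using D0 hpos by (auto simp: t_def)
    have sumk1: "(\<Sum>k<m. w1 k 0 \<tau>) = w1 j 0 \<tau>" for \<tau>
    proof -
      have "(\<Sum>k<m. w1 k 0 \<tau>) = (\<Sum>k<m. if k = j then w1 j 0 \<tau> else 0)"
      proof (intro sum.cong refl)
        fix k assume k: "k \<in> {..<m}"
        show "w1 k 0 \<tau> = (if k = j then w1 j 0 \<tau> else 0)"
          using w1pos[of k \<tau>] w1nn[of k 0 \<tau>] k by force
      qed
      also have "\<dots> = w1 j 0 \<tau>" using jm by simp
      finally show ?thesis .
    qed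
    have work1: "work m w1 0 t \<le> ennreal (1/2)"
    proof -
      have "work m w1 0 t = (\<integral>\<^sup>+ \<tau>. ennreal (w1 j 0 \<tau>) * indicator {D..t} \<tau> \<partial>lborel)"
        unfolding work_def
      proof (intro nn_integral_cong)
        fix \<tau>
        show "ennreal (\<Sum>k<m. w1 k 0 \<tau>) * indicator {..t} \<tau> = ennreal (w1 j 0 \<tau>) * indicator {D..t} \<tau>"
        proof (cases "\<tau> < D")
          case True
          then have "w1 j 0 \<tau> = 0" using w1pos[OF jm, of \<tau>] w1nn[OF jm, of 0 \<tau>] D by force
          then show ?thesis using True sumk1 by (simp add: indicator_def)
        next
          case False
          then show ?thesis using sumk1 by (simp add: indicator_def)
        qed
      qed
      also have "\<dots> \<le> ennreal (c * (t - D)) + ennreal (1 / c powr (\<alpha> - 1)) *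
          (\<integral>\<^sup>+ \<tau>. ennreal (w1 j 0 \<tau> powr \<alpha>) * indicator {D..t} \<tau> \<partial>lborel)"
        by (rule young_int) (use w1meas[OF jm] w1nn[OF jm] tpos cpos al in auto)
      also have "\<dots> \<le> ennreal (1/4) + ennreal (1 / (4 * e1 + 1)) * ennreal e1"
      proof (rule add_mono)
        show "ennreal (c * (t - D)) \<le> ennreal (1/4)" using cpos by (simp add: t_def h_def)
        have I: "(\<integral>\<^sup>+ \<tau>. ennreal (w1 j 0 \<tau> powr \<alpha>) * indicator {D..t} \<tau> \<partial>lborel) \<le> E1"
          unfolding E1_def
        proof (intro nn_integral_mono)
          fix \<tau>
          have "ennreal (w1 j 0 \<tau> powr \<alpha>) = ennreal ((\<Sum>i<1. w1 j i \<tau>) powr \<alpha>)" by simp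
          also have "\<dots> \<le> (\<Sum>k<m. ennreal ((\<Sum>i<1. w1 k i \<tau>) powr \<alpha>))"
            using jm by (intro member_le_sum) auto
          finally show "ennreal (w1 j 0 \<tau> powr \<alpha>) * indicator {D..t} \<tau> \<le> (\<Sum>k<m. ennreal ((\<Sum>i<1. w1 k i \<tau>) powr \<alpha>))"
            by (simp add: indicator_def)
        qed
        show "ennreal (1 / c powr (\<alpha> - 1)) * (\<integral>\<^sup>+ \<tau>. ennreal (w1 j 0 \<tau> powr \<alpha>) * indicator {D..t} \<tau> \<partial>lborel)
              \<le> ennreal (1 / (4 * e1 + 1)) * ennreal e1"
        proof (rule mult_mono)
          show "ennreal (1 / c powr (\<alpha> - 1)) \<le> ennreal (1 / (4 * e1 + 1))" by (simp add: cpow)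
          show "(\<integral>\<^sup>+ \<tau>. ennreal (w1 j 0 \<tau> powr \<alpha>) * indicator {D..t} \<tau> \<partial>lborel) \<le> ennreal e1"
            using I e1 by simp
        qed auto
      qed
      also have "\<dots> = ennreal (1/4) + ennreal (1 / (4 * e1 + 1) * e1)"
        using e1 by (subst ennreal_mult) auto
      also have "\<dots> = ennreal (1/4 + 1 / (4 * e1 + 1) * e1)"
        using e1 by (subst ennreal_plus) auto
      also have "\<dots> \<le> ennreal (1/2)"
      proof (intro ennreal_leI)
        have "1 / (4 * e1 + 1) * e1 \<le> 1/4" using e1 by (simp add: divide_le_eq)
        then show "1/4 + 1 / (4 * e1 + 1) * e1 \<le> 1/2" by linarith
      qed
      finally show ?thesis .
    qed
    define n2 where "n2 = Suc m"
    define r2 :: "nat \<Rightarrow> real" where "r2 = (\<lambda>i. if i = 0 then 0 else t)"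
    define x2 :: "nat \<Rightarrow> real" where "x2 = (\<lambda>i. if i = 0 then 1 else 1/8 + 1 / (8 * real i))"
    have x2pos: "0 < x2 i" for i by (simp add: x2_def add_pos_nonneg)
    have x2ge: "1/8 \<le> x2 i" for i by (simp add: x2_def)
    have x2le: "x2 i \<le> 1/4" if "i \<noteq> 0" for i
    proof -
      have "1 / (8 * real i) \<le> 1/8" using that by (simp add: field_simps)
      moreover have "x2 i = 1/8 + 1 / (8 * real i)" using that by (simp add: x2_def)
      ultimately show ?thesis by linarith
    qed
    have x2dec: "x2 i < x2 l" if "0 < l" "l < i" for i l
    proof -
      have "1 / (8 * real i) < 1 / (8 * real l)" using that by (simp add: field_simps)
      moreover have "x2 i = 1/8 + 1 / (8 * real i)" "x2 l = 1/8 + 1 / (8 * real l)" using that by (simp_all add: x2_def)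
      ultimately show ?thesis by linarith
    qed
    have val2: "valid_instance n2 r2 x2" using tpos x2pos by (simp add: valid_instance_def r2_def)
    obtain w2 a2 d2 where A2: "A n2 r2 x2 = (w2, a2, d2)" by (cases "A n2 r2 x2") auto
    note R2 = rules_get[OF rul val2 A2]
    have w2nn: "\<And>k i \<tau>. k < m \<Longrightarrow> i < n2 \<Longrightarrow> 0 \<le> w2 k i \<tau>"
      and w2rel: "\<And>k i \<tau>. k < m \<Longrightarrow> i < n2 \<Longrightarrow> \<tau> < r2 i \<Longrightarrow> w2 k i \<tau> = 0"
      by (rule feas_get[OF R2(1)]; assumption)+
    have onl_inst: "(\<forall>k<m. \<forall>\<tau>\<le>t'. w1 k 0 \<tau> = w2 k 0 \<tau>) \<and>
        ((d1 0 \<le> ereal t' \<or> d2 0 \<le> ereal t') \<longrightarrow> d1 0 = d2 0 \<and> a1 0 = a2 0)"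
      if t': "D \<le> t'" "t' < t" for t'
    proof (rule online_get[OF onl val1 val2 _ _ A1 A2])
      fix i
      show "(i < 1 \<and> r1 i \<le> t') = (i < n2 \<and> r2 i \<le> t')"
        using t' D0 by (auto simp: r1_def r2_def n2_def)
    next
      fix i assume "i < (1::nat)" "r1 i \<le> t'"
      then show "r2 i = r1 i \<and> x2 i = x1 i" by (simp add: r1_def r2_def x1_def x2_def)
    qed (use t' D0 in \<open>auto simp: r1_def\<close>)
    have agw: "w2 k 0 \<tau> = w1 k 0 \<tau>" if "k < m" "\<tau> < t" for k \<tau>
      using onl_inst[of "max \<tau> D"] that tpos by auto
    have agd: "d2 0 = ereal D \<and> a2 0 = j"
      using onl_inst[of D] tpos D by (auto simp: j_def)
    have work20: "work m w2 0 t \<le> ennreal (1/2)"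
    proof -
      have "work m w2 0 t = work m w1 0 t" unfolding work_def
      proof (intro nn_integral_cong_AE)
        show "AE \<tau> in lborel. ennreal (\<Sum>k<m. w2 k 0 \<tau>) * indicator {..t} \<tau> = ennreal (\<Sum>k<m. w1 k 0 \<tau>) * indicator {..t} \<tau>"
          using AE_lborel_singleton[of t]
        proof (rule eventually_mono)
          fix \<tau> :: real assume "\<tau> \<noteq> t"
          then show "ennreal (\<Sum>k<m. w2 k 0 \<tau>) * indicator {..t} \<tau> = ennreal (\<Sum>k<m. w1 k 0 \<tau>) * indicator {..t} \<tau>"
            using agw by (cases "\<tau> < t") (auto simp: indicator_def)
        qed
      qed
      then show ?thesis using work1 by simp
    qed
    have workn: "work m w2 i t = 0" if "0 < i" "i < n2" for i
    proof -
      have "work m w2 i t = integral\<^sup>N lborel (\<lambda>\<tau>::real. 0::ennreal)" unfolding work_def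
      proof (rule nn_integral_cong_AE)
        show "AE \<tau> in lborel. ennreal (\<Sum>k<m. w2 k i \<tau>) * indicator {..t} \<tau> = 0"
          using AE_lborel_singleton[of t]
        proof (rule eventually_mono)
          fix \<tau> :: real assume "\<tau> \<noteq> t"
          show "ennreal (\<Sum>k<m. w2 k i \<tau>) * indicator {..t} \<tau> = 0"
          proof (cases "\<tau> < t")
            case True
            then have "(\<Sum>k<m. w2 k i \<tau>) = 0" using w2rel that by (simp add: r2_def)
            then show ?thesis by simp
          next
            case False
            then show ?thesis using \<open>\<tau> \<noteq> t\<close> by (simp add: indicator_def)
          qed
        qed
      qed
      then show ?thesis by simp
    qed
    have assign: "a2 i = j \<and> d2 i = ereal t" if "0 < i" "i < n2" for i
      using that
    proof (induction i rule: less_induct)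
      case (less i)
      have r2i: "r2 i = t" using less.prems by (simp add: r2_def)
      define Y where "Y = yval m n2 r2 x2 w2 a2 d2 i"
      have lt_i: "l < i" if "l \<noteq> 0" "r2 l < r2 i \<or> (r2 l = r2 i \<and> l < i)" for l
        using that less.prems by (auto simp: r2_def)
      have Yk: "Y k = 0" if k: "k < m" "k \<noteq> j" for k
      proof -
        have "queued m n2 r2 x2 w2 a2 d2 i k = {}"
        proof (rule ccontr)
          assume "queued m n2 r2 x2 w2 a2 d2 i k \<noteq> {}"
          then obtain l where l: "l \<in> queued m n2 r2 x2 w2 a2 d2 i k" by blast
          then have l1: "l < n2" "l \<noteq> i" "a2 l = k" "r2 l < r2 i \<or> (r2 l = r2 i \<and> l < i)"
            unfolding queued_def by auto
          show False
          proof (cases "l = 0")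
            case True then show False using agd l1 k by auto
          next
            case False
            then have "l < i" using lt_i l1 by blast
            then have "a2 l = j" using less.IH[of l] False l1 by auto
            then show False using l1 k by auto
          qed
        qed
        then show ?thesis by (simp add: Y_def yval_def)
      qed
      define Q where "Q = queued m n2 r2 x2 w2 a2 d2 i j"
      have Q0: "0 \<in> Q"
      proof -
        have "work m w2 0 (r2 i) < ennreal (x2 0)"
        proof -
          have "ennreal (1/2) < ennreal 1" by (subst ennreal_less_iff) auto
          then have "work m w2 0 t < ennreal 1" using work20 by (rule le_less_trans[rotated])
          then show ?thesis using r2i by (simp add: x2_def)
        qed
        then show ?thesis unfolding Q_def queued_def using agd less.prems tpos r2i
          by (auto simp: r2_def n2_def)
      qed
      have Qfin: "finite Q" unfolding Q_def queued_def by (rule finite_subset[of _ "{..<n2}"]) auto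
      have Qgt: "x2 i < x2 l - enn2real (work m w2 l (r2 i))" if l: "l \<in> Q" for l
      proof (cases "l = 0")
        case True
        have "enn2real (work m w2 0 t) \<le> enn2real (ennreal (1/2))"
          using work20 by (intro enn2real_mono) (auto simp del: ennreal_half)
        then have "enn2real (work m w2 0 t) \<le> 1/2" by (simp del: ennreal_half)
        moreover have "x2 i \<le> 1/4" using x2le less.prems by simp
        ultimately show ?thesis using True r2i by (simp add: x2_def)
      next
        case False
        have l1: "l < n2" "r2 l < r2 i \<or> (r2 l = r2 i \<and> l < i)"
          using l unfolding Q_def queued_def by auto
        then have "l < i" using lt_i False by blast
        then have "x2 i < x2 l" using x2dec False by simp
        moreover have "work m w2 l (r2 i) = 0" using workn False l1 r2i by simp
        ultimately show ?thesis by simp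
      qed
      have Yj: "x2 i < Y j"
      proof -
        have "Y j = Min ((\<lambda>l. x2 l - enn2real (work m w2 l (r2 i))) ` Q)"
          using Q0 unfolding Y_def yval_def Q_def[symmetric] Let_def by auto
        also have "x2 i < \<dots>" using Qfin Q0 Qgt by (subst Min_gr_iff) auto
        finally show ?thesis .
      qed
      have ne: "{k. k < m \<and> yval m n2 r2 x2 w2 a2 d2 i k > x2 i} \<noteq> {}"
        using Yj jm unfolding Y_def by blast
      have res: "d2 i = ereal (r2 i) \<and> a2 i \<in> {k. k < m \<and> yval m n2 r2 x2 w2 a2 d2 i k > x2 i}"
        by (rule R2(4)) (use less.prems ne in auto)
      then have "a2 i < m" "x2 i < Y (a2 i)" unfolding Y_def by auto
      then have "a2 i = j" using Yk x2pos[of i] by (metis not_less_iff_gr_or_eq)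
      then show ?case using res r2i by simp
    qed
    define B where "B = real m powr (2 - 1 / \<alpha>) / 32 powr \<alpha>"
    have cost2: "ennreal B \<le> cost m \<alpha> n2 r2 x2 w2"
      unfolding B_def
    proof (rule lb_single[OF R2(1), of "{1..m}" m j t])
      show "{1..m} \<subseteq> {..<n2}" by (auto simp: n2_def)
      show "card {1..m} = m" by simp
      show "1 \<le> m" by (rule m1)
      show "j < m" by (rule jm)
      show "\<And>i. i \<in> {1..m} \<Longrightarrow> r2 i = t" by (auto simp: r2_def)
      show "\<And>i. i \<in> {1..m} \<Longrightarrow> 1/8 \<le> x2 i" by (rule x2ge)
      show "\<And>i k \<tau>. i \<in> {1..m} \<Longrightarrow> k < m \<Longrightarrow> 0 < w2 k i \<tau> \<Longrightarrow> k = j"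
      proof -
        fix i k \<tau> assume i: "i \<in> {1..m}" and k: "k < m" and pos: "0 < w2 k i \<tau>"
        have "k = a2 i \<and> d2 i \<le> ereal \<tau>" by (rule R2(3)) (use i k pos in \<open>auto simp: n2_def\<close>)
        moreover have "a2 i = j" using assign[of i] i by (auto simp: n2_def)
        ultimately show "k = j" by simp
      qed
    qed (rule al)
    have opt2: "opt m \<alpha> n2 r2 x2 \<le> ennreal (6 * real m)"
    proof -
      define \<sigma> :: "nat \<Rightarrow> nat" where "\<sigma> = (\<lambda>i. if i = 0 then 0 else i - 1)"
      define b :: "nat \<Rightarrow> real" where "b = (\<lambda>i. if i = 0 then 0 else t + 1)"
      have "opt m \<alpha> n2 r2 x2 \<le> ennreal ((\<Sum>i<n2. b i + x2 i - r2 i) + (\<Sum>i<n2. x2 i))"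
      proof (rule opt_simple[OF val2])
        show "\<And>i. i < n2 \<Longrightarrow> \<sigma> i < m" using m1 by (auto simp: \<sigma>_def n2_def)
        show "\<And>i. i < n2 \<Longrightarrow> r2 i \<le> b i" by (auto simp: r2_def b_def)
        show "1 < \<alpha>" by (rule al)
        fix i i' \<tau> assume "i < n2" "i' < n2" "i \<noteq> i'" "\<sigma> i = \<sigma> i'"
          "\<tau> \<in> {b i..<b i + x2 i}" "\<tau> \<in> {b i'..<b i' + x2 i'}"
        then show False using tpos by (auto simp: \<sigma>_def b_def x2_def split: if_splits)
      qed
      also have "\<dots> \<le> ennreal (real n2 * 2 + real n2 * 1)"
      proof (intro ennreal_leI add_mono)
        have "b i + x2 i - r2 i \<le> 2" for i
          using x2le[of i] by (auto simp: b_def r2_def x2_def)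
        then show "(\<Sum>i<n2. b i + x2 i - r2 i) \<le> real n2 * 2"
          using sum_bounded_above[of "{..<n2}" "\<lambda>i. b i + x2 i - r2 i" 2] by simp
        have "x2 i \<le> 1" for i using x2le[of i] by (auto simp: x2_def)
        then show "(\<Sum>i<n2. x2 i) \<le> real n2 * 1"
          using sum_bounded_above[of "{..<n2}" x2 1] by simp
      qed
      also have "\<dots> \<le> ennreal (6 * real m)" using m1 by (intro ennreal_leI) (simp add: n2_def)
      finally show ?thesis .
    qed
    have "ennreal (real m powr (1 - 1 / \<alpha>) / (6 * 32 powr \<alpha>)) = ennreal B / ennreal (6 * real m)"
    proof -
      have "real m powr (2 - 1 / \<alpha>) = real m * real m powr (1 - 1 / \<alpha>)"
      proof -
        have "real m powr (2 - 1 / \<alpha>) = real m powr (1 + (1 - 1 / \<alpha>))" by simp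
        also have "\<dots> = real m powr 1 * real m powr (1 - 1 / \<alpha>)" by (rule powr_add)
        finally show ?thesis using m1 by simp
      qed
      then have "B / (6 * real m) = real m powr (1 - 1 / \<alpha>) / (6 * 32 powr \<alpha>)"
        unfolding B_def using m1 by (simp add: field_simps)
      moreover have "ennreal B / ennreal (6 * real m) = ennreal (B / (6 * real m))"
        using m1 by (intro divide_ennreal) (auto simp: B_def)
      ultimately show ?thesis by simp
    qed
    also have "\<dots> \<le> cost m \<alpha> n2 r2 x2 w2 / ennreal (6 * real m)"
      by (rule divide_right_mono_ennreal[OF cost2])
    also have "\<dots> \<le> cost m \<alpha> n2 r2 x2 w2 / opt m \<alpha> n2 r2 x2"
      by (rule div_antimono_ennreal[OF opt2])
    also have "\<dots> \<le> comp_ratio m \<alpha> A"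
      using ratio_ge[OF val2] A2 by simp
    finally show ?thesis .
  qed
qed

theorem lemma8:
  fixes \<alpha> :: real
  assumes "\<alpha> > 1"
  shows "\<exists>\<kappa>>0. \<forall>m::nat. m \<ge> 1 \<longrightarrow> (\<forall>A. srpt_nonmig_policy m A \<longrightarrow>
           comp_ratio m \<alpha> A \<ge> ennreal (\<kappa> * real m powr (1 - 1 / \<alpha>)))"
proof (intro exI[of _ "1 / (6 * 32 powr \<alpha>)"] conjI allI impI)
  show "0 < 1 / (6 * 32 powr \<alpha>)" by simp
  fix m :: nat and A assume "1 \<le> m" "srpt_nonmig_policy m A"
  then have "ennreal (real m powr (1 - 1 / \<alpha>) / (6 * 32 powr \<alpha>)) \<le> comp_ratio m \<alpha> A"
    using main_lb assms by blast
  then show "ennreal (1 / (6 * 32 powr \<alpha>) * real m powr (1 - 1 / \<alpha>)) \<le> comp_ratio m \<alpha> A"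
    by simp
qed

end
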